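(* Let $H$ be the $3$-uniform hypergraph on vertex set $[6]$ with edges $\{1,2,3\},\{3,4,5\},\{1,5,6\}$. Then the $h$-vector of the coloring complex $\Delta_H$ is $(1,33,39,-1)$. Consequently there exist uniform hypergraphs $H$ such that $h(\Delta_H)$ has a negative entry and $\Delta_H$ is not partitionable.
   Context: The coloring complex $\Delta_H$ of a hypergraph $H=([n],E)$ is the abstract simplicial complex whose vertices are the nonempty proper subsets of $[n]$ and whose faces are the chains $\emptyset\neq A_1\subsetneq\cdots\subsetneq A_l\neq[n]$ ($l\ge0$) such that, with $A_0=\emptyset$, $A_{l+1}=[n]$, some difference $A_i\setminus A_{i-1}$ ($1\le i\le l+1$) contains an edge of $H$. For a $(d-1)$-dimensional complex with $f_i$ faces of dimension $i$ ($f_{-1}=1$), the $h$-vector $(h_0,\dots,h_d)$ is defined by $\sum_i h_i t^{d-i}=\sum_i f_{i-1}(t-1)^{d-i}$. A simplicial complex $\Delta$ with facets $F_1,\dots,F_m$ is partitionable if $\Delta=\bigsqcup_{j=1}^m[G_j,F_j]$ (disjoint union) for some faces $G_j\subseteq F_j$, where $[G,F]=\{K: G\subseteq K\subseteq F\}$. *)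

theory Defs
  imports "HOL-Computational_Algebra.Polynomial"
begin

definition hypergraph :: "nat \<Rightarrow> nat set set \<Rightarrow> bool" where
  "hypergraph n E \<longleftrightarrow> (\<forall>e\<in>E. e \<noteq> {} \<and> e \<subseteq> {1..n})"

definition uniform_hypergraph :: "nat \<Rightarrow> nat set set \<Rightarrow> bool" where
  "uniform_hypergraph n E \<longleftrightarrow> hypergraph n E \<and> (\<exists>k. \<forall>e\<in>E. card e = k)"

definition coloring_complex :: "nat \<Rightarrow> nat set set \<Rightarrow> nat set set set" where
  "coloring_complex n E = {C.
     C \<subseteq> {A. A \<noteq> {} \<and> A \<subset> {1..n}} \<and>
     (\<forall>A\<in>C. \<forall>B\<in>C. A \<subseteq> B \<or> B \<subseteq> A) \<and>
     (let C' = C \<union> {{}, {1..n}} in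
        \<exists>A\<in>C'. \<exists>B\<in>C'. A \<subset> B \<and> (\<forall>X\<in>C'. \<not> (A \<subset> X \<and> X \<subset> B)) \<and>
          (\<exists>e\<in>E. e \<subseteq> B - A))}"

text \<open>Number of faces with i elements, i.e. f_{i-1}.\<close>
definition fnum :: "'a set set \<Rightarrow> nat \<Rightarrow> nat" where
  "fnum \<Delta> i = card {F\<in>\<Delta>. card F = i}"

text \<open>d = dimension + 1 = maximal face cardinality.\<close>
definition cdim :: "'a set set \<Rightarrow> nat" where
  "cdim \<Delta> = Max (card ` \<Delta>)"

text \<open>sum_i h_i t^(d-i) = sum_i f_(i-1) (t-1)^(d-i)\<close>
definition hpoly :: "'a set set \<Rightarrow> int poly" where
  "hpoly \<Delta> = (\<Sum>i\<le>cdim \<Delta>. of_nat (fnum \<Delta> i) * [:-1, 1:] ^ (cdim \<Delta> - i))"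

definition hvector :: "'a set set \<Rightarrow> int list" where
  "hvector \<Delta> = map (\<lambda>i. coeff (hpoly \<Delta>) (cdim \<Delta> - i)) [0..<cdim \<Delta> + 1]"

definition facets :: "'a set set \<Rightarrow> 'a set set" where
  "facets \<Delta> = {F\<in>\<Delta>. \<forall>G\<in>\<Delta>. F \<subseteq> G \<longrightarrow> G = F}"

definition interval :: "'a set \<Rightarrow> 'a set \<Rightarrow> 'a set set" where
  "interval G F = {K. G \<subseteq> K \<and> K \<subseteq> F}"

definition partitionable :: "'a set set \<Rightarrow> bool" where
  "partitionable \<Delta> \<longleftrightarrow> (\<exists>g. (\<forall>F\<in>facets \<Delta>. g F \<in> \<Delta> \<and> g F \<subseteq> F) \<and>
     (\<Union>F\<in>facets \<Delta>. interval (g F) F) = \<Delta> \<and>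
     (\<forall>F1\<in>facets \<Delta>. \<forall>F2\<in>facets \<Delta>. F1 \<noteq> F2 \<longrightarrow>
        interval (g F1) F1 \<inter> interval (g F2) F2 = {}))"

end

theory Submission
  imports Defs
begin
definition props :: "nat set \<Rightarrow> nat set list" where
  "props S = filter (\<lambda>T. T \<noteq> {} \<and> T \<noteq> S) (map set (subseqs (sorted_list_of_set S)))"

fun allc :: "nat \<Rightarrow> nat set \<Rightarrow> nat set list list" where
  "allc 0 S = [[]]"
| "allc (Suc k) S = [] # concat (map (\<lambda>T. map (Cons T) (allc k T)) (props S))"

definition hasE :: "nat set set \<Rightarrow> nat set \<Rightarrow> bool" where
  "hasE E B = (\<exists>e\<in>E. e \<subseteq> B)"

fun gd :: "nat \<Rightarrow> nat set set \<Rightarrow> nat set \<Rightarrow> nat set list list" where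
  "gd 0 E S = (if hasE E S then [[]] else [])"
| "gd (Suc k) E S = (if hasE E S then [[]] else []) @ concat (map (\<lambda>T. map (Cons T)
     (if hasE E (S - T) then allc k T else if hasE E T then gd k E T else [])) (props S))"

fun good :: "nat set set \<Rightarrow> nat set \<Rightarrow> nat set list \<Rightarrow> bool" where
  "good E S [] = hasE E S"
| "good E S (T # c) = (hasE E (S - T) \<or> good E T c)"

definition sd :: "nat set list \<Rightarrow> bool" where
  "sd c = sorted_wrt (\<lambda>x y. y \<subset> x) c"

definition okc :: "nat set set \<Rightarrow> nat set \<Rightarrow> nat set list \<Rightarrow> nat set list \<Rightarrow> bool" where
  "okc E S c d = (sd d \<and> (\<forall>T\<in>set d. T \<noteq> {} \<and> T \<subseteq> S \<and> T \<noteq> S) \<and> good E S d \<and> set c \<subseteq> set d \<and> \<not> set d \<subseteq> set c)"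

definition cands :: "nat set \<Rightarrow> nat set list \<Rightarrow> nat set list list" where
  "cands S c = (let L = S # c @ [{}] in concat (map (\<lambda>i. map (\<lambda>x. take i c @ [L!(Suc i) \<union> {x}] @ drop i c)
      (sorted_list_of_set (L!i - L!(Suc i)))) [0..<length c + 1]))"

abbreviation "EE \<equiv> {{1,2,3},{3,4,5},{1,5,6}} :: nat set set"


lemma props_set: "finite S \<Longrightarrow> set (props S) = {T. T \<noteq> {} \<and> T \<subset> S}"
  unfolding props_def using subseqs_powset[of "sorted_list_of_set S"]
  by (auto simp: image_iff)

lemma props_distinct: "finite S \<Longrightarrow> distinct (props S)"
  unfolding props_def by (intro distinct_filter distinct_set_subseqs) simp

lemma hasE_mono: "A \<subseteq> B \<Longrightarrow> hasE E A \<Longrightarrow> hasE E B"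
  unfolding hasE_def by blast

lemma sd_Cons: "sd (x # xs) \<longleftrightarrow> (\<forall>y\<in>set xs. y \<subset> x) \<and> sd xs"
  unfolding sd_def by simp

lemma allc_sound: "finite S \<Longrightarrow> c \<in> set (allc k S) \<Longrightarrow> sd c \<and> set c \<subseteq> {A. A \<noteq> {} \<and> A \<subset> S}"
proof (induction k arbitrary: S c)
  case 0 then show ?case by (simp add: sd_def)
next
  case (Suc k)
  show ?case
  proof (cases c)
    case Nil then show ?thesis by (simp add: sd_def)
  next
    case (Cons T c')
    with Suc.prems have T: "T \<in> set (props S)" and c': "c' \<in> set (allc k T)" by auto
    from T Suc.prems(1) have TS: "T \<noteq> {}" "T \<subset> S" by (auto simp: props_set)
    then have "finite T" using Suc.prems(1) finite_subset by blast
    from Suc.IH[OF this c'] TS show ?thesis using Cons by (auto simp: sd_Cons)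
  qed
qed

lemma chain_Union_mem: "finite C \<Longrightarrow> C \<noteq> {} \<Longrightarrow> (\<forall>A\<in>C. \<forall>B\<in>C. A \<subseteq> B \<or> B \<subseteq> A) \<Longrightarrow> \<Union>C \<in> C"
proof (induction C rule: finite_ne_induct)
  case (singleton x) then show ?case by simp
next
  case (insert x F)
  then have "\<Union>F \<in> F" by blast
  with insert.prems have "x \<subseteq> \<Union>F \<or> \<Union>F \<subseteq> x" by blast
  then show ?case using \<open>\<Union>F \<in> F\<close> by (auto simp: sup.absorb1 sup.absorb2)
qed

lemma allc_complete: "finite S \<Longrightarrow> card S \<le> k \<Longrightarrow> C \<subseteq> {A. A \<noteq> {} \<and> A \<subset> S} \<Longrightarrow>
   (\<forall>A\<in>C. \<forall>B\<in>C. A \<subseteq> B \<or> B \<subseteq> A) \<Longrightarrow> \<exists>c\<in>set (allc k S). set c = C"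
proof (induction k arbitrary: S C)
  case 0
  then have "S = {}" by simp
  with 0 have "C = {}" by auto
  then show ?case by simp
next
  case (Suc k)
  show ?case
  proof (cases "C = {}")
    case True then show ?thesis by simp
  next
    case False
    have fC: "finite C" using Suc.prems(1,3) finite_Pow_iff
      by (metis (no_types, lifting) Pow_iff mem_Collect_eq psubset_imp_subset rev_finite_subset subsetI subset_iff)
    define T where "T = \<Union>C"
    have TC: "T \<in> C" unfolding T_def using chain_Union_mem[OF fC False] Suc.prems(4) by blast
    with Suc.prems(3) have TS: "T \<noteq> {}" "T \<subset> S" by auto
    have fT: "finite T" using TS Suc.prems(1) finite_subset by blast
    have cT: "card T \<le> k" using psubset_card_mono[OF Suc.prems(1) TS(2)] Suc.prems(2) by simp
    have sub: "C - {T} \<subseteq> {A. A \<noteq> {} \<and> A \<subset> T}" using Suc.prems(3) unfolding T_def by blast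
    obtain c' where c': "c' \<in> set (allc k T)" "set c' = C - {T}"
      using Suc.IH[OF fT cT sub] Suc.prems(4) by blast
    have "T \<in> set (props S)" using TS Suc.prems(1) by (simp add: props_set)
    then have "T # c' \<in> set (allc (Suc k) S)" using c' by auto
    moreover have "set (T # c') = C" using c' TC by auto
    ultimately show ?thesis by blast
  qed
qed

lemma good_hasE: "sd c \<Longrightarrow> (\<forall>X\<in>set c. X \<subseteq> S) \<Longrightarrow> good E S c \<Longrightarrow> hasE E S"
proof (induction c arbitrary: S)
  case Nil then show ?case by simp
next
  case (Cons X c)
  show ?case
  proof (cases "hasE E (S - X)")
    case True then show ?thesis using hasE_mono[of "S - X" S] by blast
  next
    case False
    then have "good E X c" using Cons.prems by simp
    moreover have "sd c" "\<forall>Y\<in>set c. Y \<subseteq> X" using Cons.prems(1) by (auto simp: sd_Cons)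
    ultimately have "hasE E X" using Cons.IH by blast
    then show ?thesis using Cons.prems(2) hasE_mono[of X S] by simp
  qed
qed

lemma gd_char: "finite S \<Longrightarrow> c \<in> set (gd k E S) \<longleftrightarrow> c \<in> set (allc k S) \<and> good E S c"
proof (induction k arbitrary: S c)
  case 0 then show ?case by auto
next
  case (Suc k)
  show ?case
  proof (cases c)
    case Nil then show ?thesis by auto
  next
    case (Cons T c')
    have "T # c' \<in> set (gd (Suc k) E S) \<longleftrightarrow> T \<in> set (props S) \<and>
       c' \<in> set (if hasE E (S - T) then allc k T else if hasE E T then gd k E T else [])"
      by auto
    also have "\<dots> \<longleftrightarrow> T \<in> set (props S) \<and> c' \<in> set (allc k T) \<and> (hasE E (S - T) \<or> good E T c')"
    proof (cases "T \<in> set (props S)")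
      case True
      then have fT: "finite T" using Suc.prems props_set finite_subset
        by (metis (no_types, lifting) mem_Collect_eq psubset_imp_subset)
      show ?thesis
      proof (cases "hasE E (S - T)")
        case False
        show ?thesis
        proof (cases "hasE E T")
          case True then show ?thesis using Suc.IH[OF fT] False by auto
        next
          case F2: False
          have "\<not> good E T c'" if "c' \<in> set (allc k T)"
            using allc_sound[OF fT that] good_hasE[of c' T E] F2 by auto
          then show ?thesis using False F2 by auto
        qed
      qed auto
    qed auto
    also have "\<dots> \<longleftrightarrow> T # c' \<in> set (allc (Suc k) S) \<and> good E S (T # c')" by auto
    finally show ?thesis using Cons by simp
  qed
qed

lemma distinct_cm: "distinct Ts \<Longrightarrow> (\<forall>T\<in>set Ts. distinct (h T)) \<Longrightarrow>
   distinct (concat (map (\<lambda>T. map (Cons T) (h T)) Ts))"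
  by (induction Ts) (auto simp: distinct_map)

lemma allc_distinct: "finite S \<Longrightarrow> distinct (allc k S)"
proof (induction k arbitrary: S)
  case 0 then show ?case by simp
next
  case (Suc k)
  have "\<forall>T\<in>set (props S). distinct (allc k T)"
    using Suc props_set finite_subset by (metis (no_types, lifting) mem_Collect_eq psubset_imp_subset)
  then show ?case using distinct_cm[OF props_distinct[OF Suc.prems]] by auto
qed

lemma gd_distinct: "finite S \<Longrightarrow> distinct (gd k E S)"
proof (induction k arbitrary: S)
  case 0 then show ?case by simp
next
  case (Suc k)
  have "\<forall>T\<in>set (props S). distinct (if hasE E (S - T) then allc k T else if hasE E T then gd k E T else [])"
    using Suc props_set finite_subset allc_distinct
    by (smt (verit, ccfv_threshold) distinct.simps(1) mem_Collect_eq psubset_imp_subset)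
  then show ?case using distinct_cm[OF props_distinct[OF Suc.prems]] by auto
qed

lemma good_idx: "good E S c \<longleftrightarrow> (\<exists>i. Suc i < length (S # c @ [{}]) \<and>
    hasE E ((S # c @ [{}]) ! i - (S # c @ [{}]) ! Suc i))"
proof (induction c arbitrary: S)
  case Nil
  show ?case
  proof
    assume "good E S []" then show "\<exists>i. Suc i < length (S # [] @ [{}]) \<and>
      hasE E ((S # [] @ [{}]) ! i - (S # [] @ [{}]) ! Suc i)" by (intro exI[of _ 0]) simp
  next
    assume "\<exists>i. Suc i < length (S # [] @ [{}]) \<and> hasE E ((S # [] @ [{}]) ! i - (S # [] @ [{}]) ! Suc i)"
    then obtain i where "Suc i < 2" "hasE E ((S # [] @ [{}]) ! i - (S # [] @ [{}]) ! Suc i)" by auto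
    then show "good E S []" by (cases i) auto
  qed
next
  case (Cons T c)
  have "(\<exists>i. Suc i < length (S # (T # c) @ [{}]) \<and> hasE E ((S # (T # c) @ [{}]) ! i - (S # (T # c) @ [{}]) ! Suc i))
     \<longleftrightarrow> hasE E (S - T) \<or> (\<exists>j. Suc j < length (T # c @ [{}]) \<and> hasE E ((T # c @ [{}]) ! j - (T # c @ [{}]) ! Suc j))"
    (is "?L \<longleftrightarrow> ?R")
  proof
    assume ?L
    then obtain i where i: "Suc i < length (S # (T # c) @ [{}])" "hasE E ((S # (T # c) @ [{}]) ! i - (S # (T # c) @ [{}]) ! Suc i)" by blast
    show ?R
    proof (cases i)
      case 0 then show ?thesis using i by simp
    next
      case (Suc j) then show ?thesis using i by (intro disjI2 exI[of _ j]) simp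
    qed
  next
    assume ?R
    then show ?L
    proof
      assume "hasE E (S - T)" then show ?L by (intro exI[of _ 0]) simp
    next
      assume "\<exists>j. Suc j < length (T # c @ [{}]) \<and> hasE E ((T # c @ [{}]) ! j - (T # c @ [{}]) ! Suc j)"
      then obtain j where "Suc j < length (T # c @ [{}])" "hasE E ((T # c @ [{}]) ! j - (T # c @ [{}]) ! Suc j)" by blast
      then show ?L by (intro exI[of _ "Suc j"]) simp
    qed
  qed
  then show ?case using Cons.IH[of T] by simp
qed

lemma sd_less: "sd L \<Longrightarrow> i < j \<Longrightarrow> j < length L \<Longrightarrow> L ! j \<subset> L ! i"
  unfolding sd_def using sorted_wrt_nth_less by blast

lemma sd_less_iff: "sd L \<Longrightarrow> i < length L \<Longrightarrow> j < length L \<Longrightarrow> L ! j \<subset> L ! i \<longleftrightarrow> i < j"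
  by (cases i j rule: linorder_cases) (auto dest: sd_less)

lemma cover_idx:
  assumes "sd L"
  shows "(\<exists>A\<in>set L. \<exists>B\<in>set L. A \<subset> B \<and> (\<forall>X\<in>set L. \<not> (A \<subset> X \<and> X \<subset> B)) \<and> P B A)
     \<longleftrightarrow> (\<exists>i. Suc i < length L \<and> P (L ! i) (L ! Suc i))"
proof
  assume "\<exists>A\<in>set L. \<exists>B\<in>set L. A \<subset> B \<and> (\<forall>X\<in>set L. \<not> (A \<subset> X \<and> X \<subset> B)) \<and> P B A"
  then obtain a b where ab: "a < length L" "b < length L" "L!a \<subset> L!b"
     "\<forall>X\<in>set L. \<not> (L!a \<subset> X \<and> X \<subset> L!b)" "P (L!b) (L!a)"
    by (metis in_set_conv_nth)
  have ba: "b < a" using sd_less_iff[OF assms ab(2,1)] ab(3) by simp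
  have "a = Suc b"
  proof (rule ccontr)
    assume "a \<noteq> Suc b"
    then have "Suc b < a" using ba by simp
    have s1: "L!a \<subset> L!Suc b" by (rule sd_less[OF assms \<open>Suc b < a\<close> ab(1)])
    have "Suc b < length L" using \<open>Suc b < a\<close> ab(1) by simp
    then have s2: "L!Suc b \<subset> L!b" by (intro sd_less[OF assms]) simp
    note s1 s2
    moreover have "L ! Suc b \<in> set L" using \<open>Suc b < a\<close> ab(1) by simp
    ultimately show False using ab(4) by blast
  qed
  then show "\<exists>i. Suc i < length L \<and> P (L ! i) (L ! Suc i)" using ab by blast
next
  assume "\<exists>i. Suc i < length L \<and> P (L ! i) (L ! Suc i)"
  then obtain i where i: "Suc i < length L" "P (L ! i) (L ! Suc i)" by blast
  have "\<forall>X\<in>set L. \<not> (L ! Suc i \<subset> X \<and> X \<subset> L ! i)"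
  proof
    fix X assume "X \<in> set L"
    then obtain m where m: "m < length L" "X = L ! m" by (metis in_set_conv_nth)
    show "\<not> (L ! Suc i \<subset> X \<and> X \<subset> L ! i)"
      using sd_less_iff[OF assms m(1), of "Suc i"] sd_less_iff[OF assms _ m(1), of i] i(1) m(2) by auto
  qed
  moreover have "L ! Suc i \<subset> L ! i" using sd_less[OF assms _ i(1), of i] by simp
  ultimately show "\<exists>A\<in>set L. \<exists>B\<in>set L. A \<subset> B \<and> (\<forall>X\<in>set L. \<not> (A \<subset> X \<and> X \<subset> B)) \<and> P B A"
    using i by (metis Suc_lessD nth_mem)
qed

lemma sd_chain: "sd c \<Longrightarrow> \<forall>A\<in>set c. \<forall>B\<in>set c. A \<subseteq> B \<or> B \<subseteq> A"
  by (metis in_set_conv_nth linorder_neqE_nat order.refl psubset_imp_subset sd_less)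

lemma sd_ext: "S \<noteq> {} \<Longrightarrow> sd c \<Longrightarrow> set c \<subseteq> {A. A \<noteq> {} \<and> A \<subset> S} \<Longrightarrow> sd (S # c @ [{}])"
  unfolding sd_def by (auto simp: sorted_wrt_append)

lemma cc_char:
  assumes "n > 0"
  shows "C \<in> coloring_complex n E \<longleftrightarrow> (\<exists>c. sd c \<and> set c \<subseteq> {A. A \<noteq> {} \<and> A \<subset> {1..n}} \<and> good E {1..n} c \<and> set c = C)"
proof
  assume C: "C \<in> coloring_complex n E"
  let ?S = "{1..n::nat}"
  have "C \<subseteq> Pow ?S" using C unfolding coloring_complex_def by auto
  then have "finite C" by (rule finite_subset) simp
  from C have C1: "C \<subseteq> {A. A \<noteq> {} \<and> A \<subset> ?S}" "\<forall>A\<in>C. \<forall>B\<in>C. A \<subseteq> B \<or> B \<subseteq> A"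
    unfolding coloring_complex_def by auto
  obtain c where c: "set c = C" "c \<in> set (allc n ?S)"
    using allc_complete[OF _ _ C1] by fastforce
  have sc: "sd c" "set c \<subseteq> {A. A \<noteq> {} \<and> A \<subset> ?S}" using allc_sound[OF _ c(2)] by auto
  have ne: "?S \<noteq> {}" using assms by simp
  have setL: "set (?S # c @ [{}]) = C \<union> {{}, ?S}" using c by auto
  from C have "\<exists>A\<in>set (?S # c @ [{}]). \<exists>B\<in>set (?S # c @ [{}]). A \<subset> B \<and>
     (\<forall>X\<in>set (?S # c @ [{}]). \<not> (A \<subset> X \<and> X \<subset> B)) \<and> hasE E (B - A)"
    unfolding coloring_complex_def setL hasE_def Let_def by auto
  then have "good E ?S c" unfolding good_idx cover_idx[OF sd_ext[OF ne sc]] .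
  then show "\<exists>c. sd c \<and> set c \<subseteq> {A. A \<noteq> {} \<and> A \<subset> {1..n}} \<and> good E {1..n} c \<and> set c = C"
    using sc c by blast
next
  assume "\<exists>c. sd c \<and> set c \<subseteq> {A. A \<noteq> {} \<and> A \<subset> {1..n}} \<and> good E {1..n} c \<and> set c = C"
  then obtain c where c: "sd c" "set c \<subseteq> {A. A \<noteq> {} \<and> A \<subset> {1..n}}" "good E {1..n} c" "set c = C" by blast
  let ?S = "{1..n::nat}"
  have ne: "?S \<noteq> {}" using assms by simp
  have setL: "set (?S # c @ [{}]) = C \<union> {{}, ?S}" using c by auto
  have "\<exists>A\<in>set (?S # c @ [{}]). \<exists>B\<in>set (?S # c @ [{}]). A \<subset> B \<and>
     (\<forall>X\<in>set (?S # c @ [{}]). \<not> (A \<subset> X \<and> X \<subset> B)) \<and> hasE E (B - A)"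
    using c(3) unfolding good_idx cover_idx[OF sd_ext[OF ne c(1,2)]] .
  then show "C \<in> coloring_complex n E"
    using c sd_chain[OF c(1)] unfolding coloring_complex_def setL hasE_def Let_def by auto
qed

lemma sd_unique: "sd xs \<Longrightarrow> sd ys \<Longrightarrow> set xs = set ys \<Longrightarrow> xs = ys"
proof (induction xs arbitrary: ys)
  case Nil then show ?case by simp
next
  case (Cons x xs)
  then obtain y ys' where ys: "ys = y # ys'" by (cases ys) auto
  have "x = y"
  proof (rule ccontr)
    assume "x \<noteq> y"
    then have "x \<in> set ys'" "y \<in> set xs" using Cons.prems(3) ys by auto
    moreover have "sd (y # ys')" using Cons.prems(2) ys by simp
    ultimately have "x \<subset> y" "y \<subset> x" using Cons.prems(1) unfolding sd_Cons by blast+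
    then show False by auto
  qed
  moreover have "set xs = set ys'"
  proof -
    have n1: "x \<notin> set xs" using Cons.prems(1) unfolding sd_Cons by blast
    have "sd (y # ys')" using Cons.prems(2) ys by simp
    then have n2: "x \<notin> set ys'" using \<open>x = y\<close> unfolding sd_Cons by blast
    have "insert x (set xs) = insert x (set ys')" using Cons.prems(3) ys \<open>x = y\<close> by simp
    then show ?thesis using n1 n2 by (metis Diff_insert_absorb)
  qed
  ultimately show ?case using Cons ys by (auto simp: sd_Cons)
qed

lemma sd_distinct: "sd c \<Longrightarrow> distinct c"
  by (induction c) (auto simp: sd_Cons)

lemma cc_eq: "n > 0 \<Longrightarrow> coloring_complex n E = set ` set (gd n E {1..n})"
proof (intro set_eqI iffI)
  fix C assume n: "n > 0" and "C \<in> coloring_complex n E"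
  then obtain c where c: "sd c" "set c \<subseteq> {A. A \<noteq> {} \<and> A \<subset> {1..n}}" "good E {1..n} c" "set c = C"
    using cc_char by blast
  obtain c' where c': "c' \<in> set (allc n {1..n})" "set c' = set c"
    using allc_complete[of "{1..n}" n "set c"] c sd_chain[OF c(1)] by auto
  have "sd c'" using allc_sound[OF _ c'(1)] by simp
  then have "c' = c" using sd_unique c c'(2) by blast
  then have "c \<in> set (gd n E {1..n})" using gd_char[of "{1..n}" c n E] c' c by simp
  then show "C \<in> set ` set (gd n E {1..n})" using c by blast
next
  fix C assume n: "n > 0" and "C \<in> set ` set (gd n E {1..n})"
  then obtain c where c: "c \<in> set (gd n E {1..n})" "C = set c" by blast
  then have "c \<in> set (allc n {1..n})" "good E {1..n} c" using gd_char[of "{1..n}" c n E] by auto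
  then show "C \<in> coloring_complex n E" using cc_char[OF n] allc_sound[of "{1..n}" c n] c by auto
qed

lemma gd_sd: "finite S \<Longrightarrow> c \<in> set (gd k E S) \<Longrightarrow> sd c \<and> set c \<subseteq> {A. A \<noteq> {} \<and> A \<subset> S}"
  using gd_char allc_sound by blast

lemma inj_set_sd: "\<forall>c\<in>set G. sd c \<Longrightarrow> inj_on set (set G)"
  by (meson inj_onI sd_unique)

lemma fnum_list: assumes "distinct G" "\<forall>c\<in>set G. sd c"
  shows "fnum (set ` set G) i = length (filter (\<lambda>c. length c = i) G)"
proof -
  have "{F \<in> set ` set G. card F = i} = set ` set (filter (\<lambda>c. length c = i) G)"
    using assms(2) by (auto simp: distinct_card[OF sd_distinct])
  moreover have "inj_on set (set (filter (\<lambda>c. length c = i) G))"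
    using inj_set_sd assms(2) by (metis (no_types, lifting) filter_is_subset inj_on_subset)
  moreover have "card (set (filter (\<lambda>c. length c = i) G)) = length (filter (\<lambda>c. length c = i) G)"
    by (rule distinct_card) (simp add: assms(1))
  ultimately show ?thesis unfolding fnum_def
    by (simp add: card_image)
qed


lemma alt_pow: "finite A \<Longrightarrow> (\<Sum>D\<in>Pow A. (-1::int) ^ card D) = (if A = {} then 1 else 0)"
proof (induction A rule: finite_induct)
  case empty then show ?case by simp
next
  case (insert a A)
  have inj: "inj_on (insert a) (Pow A)"
  proof (rule inj_onI)
    fix x y assume "x \<in> Pow A" "y \<in> Pow A" "insert a x = insert a y"
    then show "x = y" using insert.hyps(2) by (metis Diff_insert_absorb PowD subsetD)
  qed
  have disj: "Pow A \<inter> insert a ` Pow A = {}" using insert.hyps(2) by auto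
  have "(\<Sum>D\<in>Pow (insert a A). (-1::int) ^ card D) =
     (\<Sum>D\<in>Pow A. (-1::int) ^ card D) + (\<Sum>D\<in>insert a ` Pow A. (-1::int) ^ card D)"
    unfolding Pow_insert using insert.hyps(1) disj by (intro sum.union_disjoint) auto
  also have "(\<Sum>D\<in>insert a ` Pow A. (-1::int) ^ card D) = (\<Sum>D\<in>Pow A. (-1::int) ^ card (insert a D))"
    using sum.reindex[OF inj] by simp
  also have "\<dots> = (\<Sum>D\<in>Pow A. - ((-1::int) ^ card D))"
  proof (rule sum.cong)
    fix D assume "D \<in> Pow A"
    then have "finite D" "a \<notin> D" using insert.hyps finite_subset by auto
    then show "(-1::int) ^ card (insert a D) = - ((-1) ^ card D)" by simp
  qed simp
  finally show ?case by (simp add: sum_negf)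
qed

lemma interval_alt: assumes "finite F" "G \<subseteq> F"
  shows "(\<Sum>K\<in>interval G F. (-1::int) ^ card K) = (if G = F then (-1) ^ card F else 0)"
proof -
  have eq: "interval G F = (\<lambda>D. G \<union> D) ` Pow (F - G)"
  proof (rule set_eqI, rule iffI)
    fix K assume "K \<in> interval G F"
    then have "G \<subseteq> K" "K \<subseteq> F" unfolding interval_def by auto
    then have "K = G \<union> (K - G)" "K - G \<in> Pow (F - G)" by auto
    then show "K \<in> (\<lambda>D. G \<union> D) ` Pow (F - G)" by blast
  next
    fix K assume "K \<in> (\<lambda>D. G \<union> D) ` Pow (F - G)"
    then show "K \<in> interval G F" unfolding interval_def using assms(2) by blast
  qed
  have inj: "inj_on (\<lambda>D. G \<union> D) (Pow (F - G))"
  proof (rule inj_onI)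
    fix x y assume "x \<in> Pow (F - G)" "y \<in> Pow (F - G)" "G \<union> x = G \<union> y"
    then show "x = y" by blast
  qed
  have fG: "finite G" using assms finite_subset by blast
  have "(\<Sum>K\<in>interval G F. (-1::int) ^ card K) = (\<Sum>D\<in>Pow (F - G). (-1::int) ^ card (G \<union> D))"
    unfolding eq using sum.reindex[OF inj] by simp
  also have "\<dots> = (\<Sum>D\<in>Pow (F - G). (-1::int) ^ card G * (-1) ^ card D)"
  proof (rule sum.cong)
    fix D assume "D \<in> Pow (F - G)"
    then have "finite D" "G \<inter> D = {}" using assms(1) by (auto intro: finite_subset[of D F])
    then show "(-1::int) ^ card (G \<union> D) = (-1) ^ card G * (-1) ^ card D"
      using card_Un_disjoint[OF fG] by (simp add: power_add)
  qed simp
  also have "\<dots> = (-1) ^ card G * (if F - G = {} then 1 else 0)"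
    by (simp add: sum_distrib_left[symmetric] alt_pow assms(1))
  finally show ?thesis using assms(2) by auto
qed

definition G0 :: "nat set list list" where "G0 = gd 6 EE {1..6}"

lemma comp1: "map (\<lambda>i. length (filter (\<lambda>c. length c = i) (G0))) [0..<4] = [1,36,108,72]
  \<and> list_all (\<lambda>c. length c \<le> 3) (G0)
  \<and> sum_list (map (\<lambda>c. (-1::int)^length c) (G0)) = 1"
  unfolding G0_def by code_simp

lemma comp2: "list_all (\<lambda>c. length c < 3 \<longrightarrow> list_ex (okc EE {1..6} c) (cands {1..6} c)) (G0)"
  unfolding G0_def by code_simp

lemma comp3: "map (\<lambda>i. coeff (\<Sum>i\<le>3. of_nat ([1,36,108,72]!i) * [:-1,1:]^(3-i) :: int poly) (3-i)) [0..<3+1] = [1,33,39,-1]"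
  unfolding G0_def by code_simp

lemma G_facts:
  shows "distinct (G0)" "\<forall>c\<in>set (G0). sd c"
    and "coloring_complex 6 EE = set ` set (G0)"
  unfolding G0_def using gd_distinct[of "{1..6::nat}" 6 EE] gd_sd[of "{1..6::nat}" _ 6 EE] cc_eq[of 6 EE] by auto

lemma fnum_D: "i \<le> 3 \<Longrightarrow> fnum (coloring_complex 6 EE) i = [1,36,108,72] ! i"
proof -
  assume i: "i \<le> 3"
  have "fnum (coloring_complex 6 EE) i = length (filter (\<lambda>c. length c = i) (G0))"
    using G_facts fnum_list by metis
  also have "\<dots> = map (\<lambda>i. length (filter (\<lambda>c. length c = i) (G0))) [0..<4] ! i"
    using i by simp
  also have "\<dots> = [1,36,108,72] ! i" using comp1 by simp
  finally show ?thesis .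
qed

lemma cdim_D: "cdim (coloring_complex 6 EE) = 3"
proof -
  have all: "\<forall>c\<in>set (G0). length c \<le> 3" using comp1 by (simp add: list_all_iff)
  have "map (\<lambda>i. length (filter (\<lambda>c. length c = i) (G0))) [0..<4] ! 3 = 72"
    using comp1 by simp
  then have "filter (\<lambda>c. length c = 3) (G0) \<noteq> []" by auto
  then obtain c where c: "c \<in> set (G0)" "length c = 3"
    by (metis (mono_tags, lifting) filter_False)
  have "card ` coloring_complex 6 EE = length ` set (G0)"
    unfolding G_facts(3) image_image using G_facts(2)
    by (intro image_cong) (auto simp: distinct_card[OF sd_distinct])
  then show ?thesis unfolding cdim_def
    by (intro Max_eqI) (use all c in auto)
qed

lemma hvec: "hvector (coloring_complex 6 EE) = [1, 33, 39, -1]"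
proof -
  have P: "hpoly (coloring_complex 6 EE) = (\<Sum>i\<le>3. of_nat ([1,36,108,72]!i) * [:-1,1:]^(3-i) :: int poly)"
    unfolding hpoly_def cdim_D
  proof (rule sum.cong[OF refl])
    fix x :: nat assume "x \<in> {..3}"
    then show "of_nat (fnum (coloring_complex 6 EE) x) * [:-1, 1:] ^ (3 - x) = of_nat ([1,36,108,72]!x) * [:-1,1:]^(3-x)"
      by (subst fnum_D) auto
  qed
  show ?thesis unfolding hvector_def cdim_D P by (rule comp3)
qed

lemma facet_card: assumes "F \<in> facets (coloring_complex 6 EE)" shows "card F = 3"
proof -
  from assms have F: "F \<in> coloring_complex 6 EE" "\<forall>G\<in>coloring_complex 6 EE. F \<subseteq> G \<longrightarrow> G = F"
    unfolding facets_def by auto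
  then obtain c where c: "c \<in> set (G0)" "F = set c" using G_facts(3) by auto
  have le: "length c \<le> 3" using comp1 c(1) by (simp add: list_all_iff)
  have cardF: "card F = length c" using c G_facts(2) by (simp add: distinct_card[OF sd_distinct])
  show ?thesis
  proof (rule ccontr)
    assume "card F \<noteq> 3"
    then have "length c < 3" using le cardF by simp
    then obtain d where d: "okc EE {1..6} c d" using comp2 c(1)
      by (auto simp: list_all_iff list_ex_iff)
    then have "sd d" "set d \<subseteq> {A. A \<noteq> {} \<and> A \<subset> {1..6}}" "good EE {1..6} d"
      "set c \<subseteq> set d" "\<not> set d \<subseteq> set c" unfolding okc_def by auto
    then have "set d \<in> coloring_complex 6 EE" using cc_char[of 6 "set d" EE] by auto
    then show False using F(2) \<open>set c \<subseteq> set d\<close> \<open>\<not> set d \<subseteq> set c\<close> c(2) by auto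
  qed
qed

lemma euler_D: "(\<Sum>K\<in>coloring_complex 6 EE. (-1::int) ^ card K) = 1"
proof -
  have "(\<Sum>K\<in>coloring_complex 6 EE. (-1::int) ^ card K) = (\<Sum>c\<in>set (G0). (-1::int) ^ card (set c))"
    unfolding G_facts(3) using inj_set_sd[OF G_facts(2)] by (simp add: sum.reindex)
  also have "\<dots> = (\<Sum>c\<in>set (G0). (-1::int) ^ length c)"
    using G_facts(2) by (intro sum.cong) (auto simp: distinct_card[OF sd_distinct])
  also have "\<dots> = sum_list (map (\<lambda>c. (-1::int) ^ length c) (G0))"
    using G_facts(1) by (simp add: sum_list_distinct_conv_sum_set)
  also have "\<dots> = 1" using comp1 by simp
  finally show ?thesis .
qed

lemma not_part: "\<not> partitionable (coloring_complex 6 EE)"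
proof
  let ?D = "coloring_complex 6 EE"
  assume "partitionable ?D"
  then obtain g where g: "\<forall>F\<in>facets ?D. g F \<in> ?D \<and> g F \<subseteq> F"
    "(\<Union>F\<in>facets ?D. interval (g F) F) = ?D"
    "\<forall>F1\<in>facets ?D. \<forall>F2\<in>facets ?D. F1 \<noteq> F2 \<longrightarrow> interval (g F1) F1 \<inter> interval (g F2) F2 = {}"
    unfolding partitionable_def by blast
  have finD: "finite ?D" using G_facts(3) by simp
  have finF: "finite (facets ?D)" using finD unfolding facets_def by simp
  have finI: "\<forall>F\<in>facets ?D. finite (interval (g F) F)"
  proof
    fix F assume "F \<in> facets ?D"
    then have "finite F" using G_facts(3) unfolding facets_def by auto
    then show "finite (interval (g F) F)" unfolding interval_def
      by (rule finite_subset[rotated, OF finite_Pow_iff[THEN iffD2]]) auto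
  qed
  have "(\<Sum>K\<in>?D. (-1::int) ^ card K) = (\<Sum>K\<in>(\<Union>F\<in>facets ?D. interval (g F) F). (-1::int) ^ card K)"
    by (simp only: g(2))
  also have "\<dots> = (\<Sum>F\<in>facets ?D. \<Sum>K\<in>interval (g F) F. (-1::int) ^ card K)"
    using finF finI g(3) by (intro sum.UNION_disjoint) auto
  also have "\<dots> = (\<Sum>F\<in>facets ?D. if g F = F then -1 else 0)"
  proof (rule sum.cong)
    fix F assume F: "F \<in> facets ?D"
    then have "finite F" using G_facts(3) unfolding facets_def by auto
    then show "(\<Sum>K\<in>interval (g F) F. (-1::int) ^ card K) = (if g F = F then -1 else 0)"
      using interval_alt[of F "g F"] g(1) F facet_card[OF F] by simp
  qed simp
  also have "\<dots> \<le> 0" by (intro sum_nonpos) simp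
  finally show False using euler_D by simp
qed

theorem mainTheorem10:
  shows "hvector (coloring_complex 6 {{1,2,3},{3,4,5},{1,5,6}}) = [1, 33, 39, -1]
    \<and> (\<exists>n E. uniform_hypergraph n E \<and>
         (\<exists>x\<in>set (hvector (coloring_complex n E)). x < 0) \<and>
         \<not> partitionable (coloring_complex n E))"
proof -
  have u: "uniform_hypergraph 6 EE"
    unfolding uniform_hypergraph_def hypergraph_def by (intro conjI exI[of _ 3]) auto
  have neg: "\<exists>x\<in>set (hvector (coloring_complex 6 EE)). x < 0" unfolding hvec by simp
  show ?thesis
    apply (rule conjI)
     apply (rule hvec)
    apply (rule exI[of _ 6], rule exI[of _ EE])
    apply (intro conjI u neg not_part)
    done
qed

end
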